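(* Let $K$ be a field (of arbitrary characteristic), $\phi$ the $K$-algebra endomorphism of $K[x]$ with $\phi(x)=w(x)$ where $\deg w(x)\ge 2$, and $\delta=\mathrm{id}-\phi$. If $f\in K[x]$ satisfies $f^i\in\operatorname{Im}\delta$ for all $1\le i\le 3$, then $f=0$. Consequently, $\mathfrak{r}(\operatorname{Im}\delta)=\{0\}$, and $\delta$ maps every $K$-subspace of $K[x]$ to a Mathieu subspace of $K[x]$.
   Context: $\mathrm{id}$ is the identity map of $K[x]$. For a subset $V$ of $K[x]$, $\mathfrak{r}(V)=\{a\in K[x]\mid a^m\in V\text{ for all } m\gg0\}$. A $K$-subspace $V$ of a commutative $K$-algebra $\mathcal{A}$ is a Mathieu subspace if for all $a,b\in\mathcal{A}$ with $a^m\in V$ for all $m\ge 1$, one has $a^mb\in V$ for all $m\gg 0$. *)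

theory Defs
  imports "HOL-Computational_Algebra.Polynomial"
begin

text \<open>The K-algebra endomorphism phi of K[x] with phi(x) = w is composition with w;
  delta = id - phi.\<close>
definition delta_map :: "'a::field poly \<Rightarrow> 'a poly \<Rightarrow> 'a poly" where
  "delta_map w p = p - pcompose p w"

definition rad_set :: "'a::field poly set \<Rightarrow> 'a poly set" where
  "rad_set V = {a. eventually (\<lambda>m. a ^ m \<in> V) sequentially}"

definition ksubspace :: "'a::field poly set \<Rightarrow> bool" where
  "ksubspace V \<longleftrightarrow> 0 \<in> V \<and> (\<forall>p\<in>V. \<forall>q\<in>V. p + q \<in> V) \<and> (\<forall>c. \<forall>p\<in>V. smult c p \<in> V)"

definition mathieu_subspace :: "'a::field poly set \<Rightarrow> bool" where
  "mathieu_subspace V \<longleftrightarrow> ksubspace V \<and>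
     (\<forall>a b. (\<forall>m\<ge>1. a ^ m \<in> V) \<longrightarrow> eventually (\<lambda>m. a ^ m * b \<in> V) sequentially)"

end

theory Submission imports Defs begin

lemma pcompose_power': "pcompose (p ^ k) w = (pcompose p w) ^ k"
  for p w :: "'a::field poly"
  by (induction k) (simp_all add: pcompose_mult pcompose_1)

lemma deg_delta:
  fixes w q :: "'a::field poly"
  assumes "degree w \<ge> 2"
  shows "degree (delta_map w q) = degree q * degree w"
proof (cases "degree q = 0")
  case True
  then obtain a where "q = [:a:]" using degree0_coeffs by blast
  then show ?thesis by (simp add: delta_map_def)
next
  case False
  have d: "degree (pcompose q w) = degree q * degree w" by (rule degree_pcompose)
  have lt: "degree q < degree (pcompose q w)" using False assms d by simp
  have "delta_map w q = - (pcompose q w + (- q))" by (simp add: delta_map_def)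
  moreover have "degree (pcompose q w + (- q)) = degree (pcompose q w)"
    using lt by (intro degree_add_eq_left) simp
  ultimately show ?thesis using d by (metis degree_minus)
qed

lemma deg_zero_factor:
  fixes P X Y :: "'a::field poly"
  assumes "P * X = Y" "degree Y \<le> degree P" "P \<noteq> 0"
  shows "\<exists>c. X = [:c:]"
proof (cases "X = 0")
  case True then show ?thesis by (intro exI[of _ 0]) simp
next
  case False
  then have "degree Y = degree P + degree X" using assms degree_mult_eq by metis
  then have "degree X = 0" using assms by simp
  then show ?thesis using degree0_coeffs by blast
qed

lemma square_step:
  fixes w p q :: "'a::field poly"
  assumes w2: "degree w \<ge> 2" and two: "(2::'a) \<noteq> 0" and n1: "degree p \<ge> 1"
    and sq: "(delta_map w p)^2 = delta_map w q"
  shows "\<exists>S. p = pcompose S w"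
proof -
  define P where "P = pcompose p w"
  define n where "n = degree p"
  define d where "d = degree w"
  have d2: "d \<ge> 2" using w2 d_def by simp
  have dP: "degree P = n * d" unfolding P_def n_def d_def by (rule degree_pcompose)
  have pos: "n * d > 0" using n1 d2 n_def by simp
  have Pnz: "P \<noteq> 0" proof assume "P = 0" with dP pos show False by simp qed
  have df: "degree (delta_map w p) = n * d" using deg_delta[OF w2] n_def d_def by simp
  have fnz: "delta_map w p \<noteq> 0" proof assume "delta_map w p = 0" with df pos show False by simp qed
  have "degree ((delta_map w p)^2) = 2 * (n * d)" using degree_power_eq[OF fnz] df by simp
  moreover have "degree (delta_map w q) = degree q * d" using deg_delta[OF w2] d_def by simp
  ultimately have "degree q * d = 2 * n * d" using sq by (metis mult.assoc)
  then have dq: "degree q = 2 * n" using d2 by simp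
  define r where "r = q + p^2"
  define s where "s = r div p"
  define t where "t = r mod p"
  have pnz: "p \<noteq> 0" using n1 by auto
  have rst: "r = s * p + t" unfolding s_def t_def by simp
  have dt: "degree t \<le> n"
    using degree_mod_less[OF pnz, of r] n_def t_def by (cases "t = 0") auto
  have e1: "q - pcompose q w = (p - P)^2" using sq unfolding delta_map_def P_def by simp
  have e2: "pcompose r w = pcompose q w + P^2"
    unfolding r_def P_def by (simp add: pcompose_add pcompose_power')
  have e3: "pcompose r w = pcompose s w * P + pcompose t w"
    unfolding P_def by (subst rst) (simp add: pcompose_add pcompose_mult)
  have eq: "P * (pcompose s w - 2 * p) = (q - p^2) - pcompose t w"
  proof -
    have "pcompose s w * P + pcompose t w = q - (p - P)^2 + P^2" using e1 e2 e3 by (simp add: algebra_simps)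
    then show ?thesis by (simp add: algebra_simps power2_eq_square)
  qed
  have "degree (q - p^2) \<le> n * d"
  proof -
    have "degree (p^2) \<le> 2 * n" using degree_power_le[of p 2] n_def by simp
    then have "degree (q - p^2) \<le> 2 * n" using dq by (intro degree_diff_le) auto
    also have "2 * n \<le> n * d" using d2 by simp
    finally show ?thesis .
  qed
  moreover have "degree (pcompose t w) \<le> n * d" using dt degree_pcompose[of t w] d_def by simp
  ultimately have "degree ((q - p^2) - pcompose t w) \<le> degree P" using dP degree_diff_le[of "q - p^2" "n*d" "pcompose t w"] by simp
  then obtain c where c: "pcompose s w - 2 * p = [:c:]" using deg_zero_factor[OF eq _ Pnz] by blast
  have "pcompose (smult (inverse 2) (s - [:c:])) w = p"
  proof -
    have "pcompose (smult (inverse 2) (s - [:c:])) w = smult (inverse 2) (pcompose s w - [:c:])"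
      by (simp add: pcompose_smult pcompose_diff)
    also have "pcompose s w - [:c:] = smult 2 p" using c by (simp add: numeral_poly algebra_simps)
    finally show ?thesis using two by simp
  qed
  then show ?thesis by metis
qed

lemma cube_step:
  fixes w p q :: "'a::field poly"
  assumes w2: "degree w \<ge> 2" and three: "(3::'a) \<noteq> 0" and n1: "degree p \<ge> 1"
    and cb: "(delta_map w p)^3 = delta_map w q"
  shows "\<exists>S. p = pcompose S w"
proof -
  define P where "P = pcompose p w"
  define n where "n = degree p"
  define d where "d = degree w"
  have d2: "d \<ge> 2" using w2 d_def by simp
  have dP: "degree P = n * d" unfolding P_def n_def d_def by (rule degree_pcompose)
  have pos: "n * d > 0" using n1 d2 n_def by simp
  have Pnz: "P \<noteq> 0" proof assume "P = 0" with dP pos show False by simp qed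
  have P2nz: "P^2 \<noteq> 0" using Pnz by simp
  have dP2: "degree (P^2) = 2 * (n * d)" using degree_power_eq[OF Pnz] dP by simp
  have df: "degree (delta_map w p) = n * d" using deg_delta[OF w2] n_def d_def by simp
  have fnz: "delta_map w p \<noteq> 0" proof assume "delta_map w p = 0" with df pos show False by simp qed
  have "degree ((delta_map w p)^3) = 3 * (n * d)" using degree_power_eq[OF fnz] df by simp
  moreover have "degree (delta_map w q) = degree q * d" using deg_delta[OF w2] d_def by simp
  ultimately have "degree q * d = 3 * n * d" using cb by (metis mult.assoc)
  then have dq: "degree q = 3 * n" using d2 by simp
  define r where "r = q - p^3"
  define s where "s = r div p^2"
  define t where "t = r mod p^2"
  have pnz: "p^2 \<noteq> 0" using n1 by auto
  have rst: "r = s * p^2 + t" unfolding s_def t_def by (rule div_mult_mod_eq[symmetric])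
  have p0: "p \<noteq> 0" using n1 by auto
  have dp2: "degree (p^2) = 2 * n" using degree_power_eq[OF p0, of 2] n_def by simp
  have dt: "degree t \<le> 2 * n"
    using degree_mod_less[OF pnz, of r] dp2 t_def by (cases "t = 0") auto
  have e1: "q - pcompose q w = (p - P)^3" using cb unfolding delta_map_def P_def by simp
  have e2: "pcompose r w = pcompose q w - P^3"
    unfolding r_def P_def by (simp add: pcompose_diff pcompose_power')
  have e3: "pcompose r w = pcompose s w * P^2 + pcompose t w"
    unfolding P_def by (subst rst) (simp add: pcompose_add pcompose_mult pcompose_power')
  have eq: "P^2 * (pcompose s w + 3 * p) = ((q - p^3) + 3 * p^2 * P) - pcompose t w"
  proof -
    have Q: "pcompose q w = q - (p - P)^3" by (simp add: e1[symmetric])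
    have "pcompose s w * P^2 + pcompose t w = q - (p - P)^3 - P^3" using e2 e3 Q by simp
    then show ?thesis by (simp add: algebra_simps power2_eq_square power3_eq_cube)
  qed
  have A: "degree (q - p^3) \<le> 2 * (n * d)"
  proof -
    have "degree (p^3) \<le> 3 * n" using degree_power_le[of p 3] n_def by simp
    then have "degree (q - p^3) \<le> 3 * n" using dq by (intro degree_diff_le) auto
    also have "3 * n \<le> 2 * (n * d)" using d2 by simp
    finally show ?thesis .
  qed
  have B: "degree (3 * p^2 * P) \<le> 2 * (n * d)"
  proof -
    have "degree (3 * p^2 * P) \<le> degree (3 * p^2) + degree P" by (rule degree_mult_le)
    also have "degree (3 * p^2) \<le> degree (3::'a poly) + degree (p^2)" by (rule degree_mult_le)
    finally have "degree (3 * p^2 * P) \<le> 2 * n + n * d" using dp2 dP by (simp add: numeral_poly)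
    also have "\<dots> \<le> 2 * (n * d)" using d2 by simp
    finally show ?thesis .
  qed
  have C: "degree (pcompose t w) \<le> 2 * (n * d)" using dt degree_pcompose[of t w] d_def by simp
  have "degree ((q - p^3) + 3 * p^2 * P) \<le> 2 * (n * d)" using A B by (rule degree_add_le)
  then have "degree (((q - p^3) + 3 * p^2 * P) - pcompose t w) \<le> degree (P^2)"
    using dP2 C degree_diff_le[of "(q - p^3) + 3 * p^2 * P" "2*(n*d)" "pcompose t w"] by simp
  then obtain c where c: "pcompose s w + 3 * p = [:c:]" using deg_zero_factor[OF eq _ P2nz] by blast
  have "pcompose (smult (inverse 3) ([:c:] - s)) w = p"
  proof -
    have "pcompose (smult (inverse 3) ([:c:] - s)) w = smult (inverse 3) ([:c:] - pcompose s w)"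
      by (simp add: pcompose_smult pcompose_diff)
    also have "[:c:] - pcompose s w = smult 3 p" using c by (simp add: numeral_poly algebra_simps)
    finally show ?thesis using three by simp
  qed
  then show ?thesis by metis
qed

lemma lift_img:
  fixes w S q :: "'a::field poly"
  assumes "(pcompose (delta_map w S) w)^k = delta_map w q"
  shows "(delta_map w S)^k \<in> range (delta_map w)"
proof -
  have "delta_map w (q + (delta_map w S)^k) = (delta_map w S)^k"
    using assms by (simp add: delta_map_def pcompose_add pcompose_power' algebra_simps)
  then show ?thesis by (metis rangeI)
qed

lemma main_delta:
  fixes w p :: "'a::field poly"
  assumes w2: "degree w \<ge> 2"
  shows "(delta_map w p)^2 \<in> range (delta_map w) \<Longrightarrow> (delta_map w p)^3 \<in> range (delta_map w)
    \<Longrightarrow> delta_map w p = 0"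
proof (induction "degree p" arbitrary: p rule: less_induct)
  case less
  show ?case
  proof (cases "degree p = 0")
    case True
    then obtain a where "p = [:a:]" using degree0_coeffs by blast
    then show ?thesis by (simp add: delta_map_def)
  next
    case False
    obtain q2 where q2: "(delta_map w p)^2 = delta_map w q2" using less.prems by auto
    obtain q3 where q3: "(delta_map w p)^3 = delta_map w q3" using less.prems by auto
    have n1: "degree p \<ge> 1" using False by simp
    have "\<exists>S. p = pcompose S w"
    proof (cases "(2::'a) = 0")
      case True
      then have "(3::'a) = 1" by (metis add_0 numeral_One numeral_plus_one one_plus_numeral numeral_Bit0 numeral_Bit1 one_add_one)
      then have "(3::'a) \<noteq> 0" by simp
      then show ?thesis using cube_step[OF w2 _ n1 q3] by blast
    next
      case False
      then show ?thesis using square_step[OF w2 False n1 q2] by blast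
    qed
    then obtain S where S: "p = pcompose S w" by blast
    have dS: "degree p = degree S * degree w" using S degree_pcompose by metis
    then have "degree S \<ge> 1" using n1 by (cases "degree S = 0") auto
    then have lt: "degree S < degree p" using dS w2
      by (metis less_le_trans mult_less_cancel1 nat_mult_1_right numeral_le_one_iff semiring_norm(69) one_less_numeral_iff le_neq_implies_less mult_le_mono2 not_less zero_less_one nat_1_add_1 Suc_le_lessD numeral_2_eq_2 less_one)
    have comp: "delta_map w p = pcompose (delta_map w S) w"
      using S by (simp add: delta_map_def pcompose_diff)
    have "(delta_map w S)^2 \<in> range (delta_map w)" using lift_img[of w S 2 q2] q2 comp by simp
    moreover have "(delta_map w S)^3 \<in> range (delta_map w)" using lift_img[of w S 3 q3] q3 comp by simp
    ultimately have "delta_map w S = 0" using less.hyps[OF lt] by blast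
    then show ?thesis using comp by simp
  qed
qed

lemma part1:
  fixes w f :: "'a::field poly"
  assumes w2: "degree w \<ge> 2" and h: "\<forall>i\<in>{1..3::nat}. f ^ i \<in> range (delta_map w)"
  shows "f = 0"
proof -
  have "(1::nat) \<in> {1..3}" "(2::nat) \<in> {1..3}" "(3::nat) \<in> {1..3}" by auto
  then have "f ^ 1 \<in> range (delta_map w)" "f ^ 2 \<in> range (delta_map w)" "f ^ 3 \<in> range (delta_map w)"
    using h by blast+
  then obtain p where p: "f = delta_map w p" "f ^ 2 \<in> range (delta_map w)" "f ^ 3 \<in> range (delta_map w)" by auto
  then show ?thesis using main_delta[OF w2, of p] p by simp
qed

theorem proposition3p7:
  fixes w :: "'a::field poly"
  assumes "degree w \<ge> 2"
  shows "(\<forall>f. (\<forall>i\<in>{1..3::nat}. f ^ i \<in> range (delta_map w)) \<longrightarrow> f = 0)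
       \<and> rad_set (range (delta_map w)) = {0}
       \<and> (\<forall>V. ksubspace V \<longrightarrow> mathieu_subspace (delta_map w ` V))"
proof (intro conjI allI impI)
  show "\<And>f. \<forall>i\<in>{1..3::nat}. f ^ i \<in> range (delta_map w) \<Longrightarrow> f = 0"
    using part1[OF assms] by blast
  have d0: "delta_map w 0 = 0" by (simp add: delta_map_def)
  show "rad_set (range (delta_map w)) = {0}"
  proof
    show "{0} \<subseteq> rad_set (range (delta_map w))"
      unfolding rad_set_def eventually_sequentially
      using d0 by (auto intro!: exI[of _ 1] simp: power_0_left)
    show "rad_set (range (delta_map w)) \<subseteq> {0}"
    proof
      fix a assume "a \<in> rad_set (range (delta_map w))"
      then obtain M where M: "\<And>m. m \<ge> M \<Longrightarrow> a ^ m \<in> range (delta_map w)"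
        unfolding rad_set_def eventually_sequentially by blast
      have "\<forall>i\<in>{1..3::nat}. (a ^ Suc M) ^ i \<in> range (delta_map w)"
      proof
        fix i :: nat assume "i \<in> {1..3}"
        then have "i \<ge> 1" by simp
        then have "Suc M * i \<ge> M" by (metis le_SucI mult.right_neutral mult_le_mono2 order_trans le_refl)
        then have "a ^ (Suc M * i) \<in> range (delta_map w)" using M by blast
        then show "(a ^ Suc M) ^ i \<in> range (delta_map w)" by (simp only: power_mult)
      qed
      then have "a ^ Suc M = 0" using part1[OF assms] by blast
      then have "a = 0" by (meson power_eq_0_iff)
      then show "a \<in> {0}" by simp
    qed
  qed
  fix V :: "'a poly set" assume V: "ksubspace V"
  show "mathieu_subspace (delta_map w ` V)"
    unfolding mathieu_subspace_def
  proof (intro conjI allI impI)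
    show "ksubspace (delta_map w ` V)"
      unfolding ksubspace_def
    proof (intro conjI ballI allI)
      show "0 \<in> delta_map w ` V" using V d0 unfolding ksubspace_def by (metis image_eqI)
    next
      fix x y assume "x \<in> delta_map w ` V" "y \<in> delta_map w ` V"
      then obtain u v where "u \<in> V" "v \<in> V" "x = delta_map w u" "y = delta_map w v" by auto
      moreover have "delta_map w (u + v) = delta_map w u + delta_map w v"
        by (simp add: delta_map_def pcompose_add)
      moreover have "u + v \<in> V" using V \<open>u \<in> V\<close> \<open>v \<in> V\<close> unfolding ksubspace_def by blast
      ultimately show "x + y \<in> delta_map w ` V" by (metis image_eqI)
    next
      fix c x assume "x \<in> delta_map w ` V"
      then obtain u where "u \<in> V" "x = delta_map w u" by auto
      moreover have "delta_map w (smult c u) = smult c (delta_map w u)"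
        by (simp add: delta_map_def pcompose_smult smult_diff_right)
      moreover have "smult c u \<in> V" using V \<open>u \<in> V\<close> unfolding ksubspace_def by blast
      ultimately show "smult c x \<in> delta_map w ` V" by (metis image_eqI)
    qed
    fix a b :: "'a poly"
    assume ha: "\<forall>m\<ge>1. a ^ m \<in> delta_map w ` V"
    have "\<forall>i\<in>{1..3::nat}. a ^ i \<in> range (delta_map w)" using ha by auto
    then have a0: "a = 0" using part1[OF assms] by blast
    have "0 \<in> delta_map w ` V" using V d0 unfolding ksubspace_def by (metis image_eqI)
    then show "eventually (\<lambda>m. a ^ m * b \<in> delta_map w ` V) sequentially"
      unfolding eventually_sequentially
    proof (intro exI[of _ 1] allI impI)
      fix m :: nat assume "m \<ge> 1"
      then have "a ^ m * b = 0" using a0 by (simp add: power_0_left)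
      then show "a ^ m * b \<in> delta_map w ` V" using \<open>0 \<in> delta_map w ` V\<close> by metis
    qed
  qed
qed

end
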